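(* Fix $\epsilon\in(0,\frac13)$ and $d\ge4$. Let $f:\{0,1\}^d\to\mathbb{R}$ satisfy $\ell_0(f,\mathrm{Lip})\le\epsilon$. Choose $p\in\{0,1\}^d$ uniformly at random, set $t=2\sqrt{d\log(d/\epsilon)}$ and $I=[f(p)-t,f(p)+t]$. Then, with probability at most $\frac5{12}$ over $p$, $\Pr_{x}[f(x)\notin I]>\epsilon[\overline I]+\frac\epsilon d$, where $x$ is uniform in $\{0,1\}^d$ and $\overline I=\mathbb{R}\setminus I$.
   Context: On $\{0,1\}^d$ with Hamming distance, $f$ is Lipschitz if $|f(x)-f(y)|\le|x-y|$; $\ell_0(f,\mathrm{Lip})=\min_{g\text{ Lipschitz}}\Pr_x[f(x)\ne g(x)]$. $VS_f(x,y)=|f(x)-f(y)|-|x-y|$ if positive, else $0$; $B_{0,f}$ is the graph on $\{0,1\}^d$ with an edge between $x,y$ iff $VS_f(x,y)>0$. Fix a canonical minimum vertex cover $C$ of $B_{0,f}$; for an interval (or set) $J\subseteq\mathbb{R}$, $\epsilon[J]=|\{x\in C: f(x)\in J\}|/2^d$. (Equivalently, $\Pr_x[f(x)\notin I]$ is the $\ell_0$-distance between $f$ and the partial function $f_I$ that agrees with $f$ where $f(x)\in I$ and is undefined elsewhere.) *)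

theory Defs
  imports "HOL-Analysis.Analysis"
begin

text \<open>The hypercube {0,1}^d, with a point represented by the set of its 1-coordinates.\<close>
definition cube :: "nat \<Rightarrow> nat set set" where
  "cube d = Pow {..<d}"

definition hamming :: "nat set \<Rightarrow> nat set \<Rightarrow> nat" where
  "hamming x y = card ((x - y) \<union> (y - x))"

definition lipschitz_on_cube :: "nat \<Rightarrow> (nat set \<Rightarrow> real) \<Rightarrow> bool" where
  "lipschitz_on_cube d g \<longleftrightarrow>
     (\<forall>x\<in>cube d. \<forall>y\<in>cube d. \<bar>g x - g y\<bar> \<le> real (hamming x y))"

definition disagree :: "nat \<Rightarrow> (nat set \<Rightarrow> real) \<Rightarrow> (nat set \<Rightarrow> real) \<Rightarrow> real" where
  "disagree d f g = real (card {x\<in>cube d. f x \<noteq> g x}) / 2 ^ d"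

definition l0_dist_lip :: "nat \<Rightarrow> (nat set \<Rightarrow> real) \<Rightarrow> real" where
  "l0_dist_lip d f = Inf (disagree d f ` {g. lipschitz_on_cube d g})"

definition VS :: "(nat set \<Rightarrow> real) \<Rightarrow> nat set \<Rightarrow> nat set \<Rightarrow> real" where
  "VS f x y = max 0 (\<bar>f x - f y\<bar> - real (hamming x y))"

definition B0_edge :: "nat \<Rightarrow> (nat set \<Rightarrow> real) \<Rightarrow> nat set \<Rightarrow> nat set \<Rightarrow> bool" where
  "B0_edge d f x y \<longleftrightarrow> x \<in> cube d \<and> y \<in> cube d \<and> VS f x y > 0"

definition vertex_cover_B0 :: "nat \<Rightarrow> (nat set \<Rightarrow> real) \<Rightarrow> nat set set \<Rightarrow> bool" where
  "vertex_cover_B0 d f C \<longleftrightarrow> C \<subseteq> cube d \<and>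
     (\<forall>x y. B0_edge d f x y \<longrightarrow> x \<in> C \<or> y \<in> C)"

definition min_vertex_cover_B0 :: "nat \<Rightarrow> (nat set \<Rightarrow> real) \<Rightarrow> nat set set \<Rightarrow> bool" where
  "min_vertex_cover_B0 d f C \<longleftrightarrow> vertex_cover_B0 d f C \<and>
     (\<forall>C'. vertex_cover_B0 d f C' \<longrightarrow> card C \<le> card C')"

definition eps_mass :: "nat \<Rightarrow> (nat set \<Rightarrow> real) \<Rightarrow> nat set set \<Rightarrow> real set \<Rightarrow> real" where
  "eps_mass d f C J = real (card {x\<in>C. f x \<in> J}) / 2 ^ d"

definition prob_outside :: "nat \<Rightarrow> (nat set \<Rightarrow> real) \<Rightarrow> real set \<Rightarrow> real" where
  "prob_outside d f I = real (card {x\<in>cube d. f x \<notin> I}) / 2 ^ d"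

end

theory Submission
  imports Defs "HOL-Probability.Hoeffding"
begin

lemma two_point_aux:
  fixes a b lam :: real
  assumes "lam \<ge> 0" "a \<le> b" "b - a \<le> 1"
  shows "exp (lam*a) + exp (lam*b) \<le> 2 * exp (lam*(a+b)/2 + lam\<^sup>2/8)"
proof -
  define h where "h = lam * (b - a)"
  have h0: "h \<ge> 0" using assms by (simp add: h_def)
  have "-h * (1/2) + ln (1 + (1/2) * (exp h - 1)) \<le> h\<^sup>2/8"
    using Hoeffdings_lemma_aux[of h "1/2"] h0 by simp
  moreover have pos: "1 + (1/2) * (exp h - 1) > 0"
  proof -
    have "exp h > 0" by simp
    hence "0 < 1 + exp h" by linarith
    thus ?thesis by (simp add: field_simps)
  qed
  ultimately have "ln (1 + (1/2) * (exp h - 1)) \<le> h/2 + h\<^sup>2/8" by simp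
  hence "1 + (1/2) * (exp h - 1) \<le> exp (h/2 + h\<^sup>2/8)"
    using pos by (metis exp_le_cancel_iff exp_ln)
  hence e1: "1 + exp h \<le> 2 * exp (h/2 + h\<^sup>2/8)" by (simp add: field_simps)
  have hsq: "h\<^sup>2 \<le> lam\<^sup>2"
  proof -
    have "h\<^sup>2 = lam\<^sup>2 * (b-a)\<^sup>2" by (simp add: h_def power_mult_distrib)
    also have "\<dots> \<le> lam\<^sup>2 * 1"
      using assms by (intro mult_left_mono) (auto simp: power_le_one)
    finally show ?thesis by simp
  qed
  have lb: "lam*b = lam*a + h" by (simp add: h_def algebra_simps)
  have "exp (lam*a) + exp (lam*b) = exp (lam*a) * (1 + exp h)"
    unfolding lb exp_add by (simp add: distrib_left)
  also have "\<dots> \<le> exp (lam*a) * (2 * exp (h/2 + h\<^sup>2/8))"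
    using e1 by (intro mult_left_mono) auto
  also have "\<dots> = 2 * exp (lam*(a+b)/2 + h\<^sup>2/8)"
  proof -
    have e: "lam*a + (h/2 + h\<^sup>2/8) = lam*(a+b)/2 + h\<^sup>2/8" by (simp add: h_def field_simps)
    show ?thesis unfolding e[symmetric] by (simp add: exp_add)
  qed
  also have "\<dots> \<le> 2 * exp (lam*(a+b)/2 + lam\<^sup>2/8)"
    using hsq by simp
  finally show ?thesis .
qed

lemma two_point:
  fixes a b lam :: real
  assumes "lam \<ge> 0" "\<bar>a - b\<bar> \<le> 1"
  shows "exp (lam*a) + exp (lam*b) \<le> 2 * exp (lam*(a+b)/2 + lam\<^sup>2/8)"
proof (cases "a \<le> b")
  case True thus ?thesis using two_point_aux[of lam a b] assms by simp
next
  case False thus ?thesis using two_point_aux[of lam b a] assms by (simp add: add.commute)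
qed

lemma cube_Suc: "cube (Suc d) = cube d \<union> insert d ` cube d"
  by (simp add: cube_def lessThan_Suc Pow_insert)

lemma notin_cube: "x \<in> cube d \<Longrightarrow> d \<notin> x"
  by (auto simp: cube_def)

lemma sum_cube_Suc: "(\<Sum>x\<in>cube (Suc d). F x) = (\<Sum>x\<in>cube d. F x + F (insert d x))"
proof -
  have fin: "finite (cube d)" by (simp add: cube_def)
  have disj: "cube d \<inter> insert d ` cube d = {}" using notin_cube by blast
  have inj: "inj_on (insert d) (cube d)"
    by (rule inj_onI) (metis insert_ident notin_cube)
  have "(\<Sum>x\<in>cube (Suc d). F x) = (\<Sum>x\<in>cube d. F x) + (\<Sum>x\<in>insert d ` cube d. F x)"
    unfolding cube_Suc by (rule sum.union_disjoint) (use fin disj in auto)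
  also have "(\<Sum>x\<in>insert d ` cube d. F x) = (\<Sum>x\<in>cube d. F (insert d x))"
    using sum.reindex[OF inj] by simp
  finally show ?thesis by (simp add: sum.distrib)
qed

lemma hamming_insert:
  assumes "x \<in> cube d" "y \<in> cube d"
  shows "hamming (insert d x) (insert d y) = hamming x y"
proof -
  have "d \<notin> x" "d \<notin> y" using assms notin_cube by auto
  hence "insert d x - insert d y = x - y" "insert d y - insert d x = y - x" by auto
  thus ?thesis by (simp add: hamming_def)
qed

lemma hamming_insert1:
  assumes "x \<in> cube d"
  shows "hamming x (insert d x) = 1"
proof -
  have "d \<notin> x" using assms notin_cube by auto
  hence "(x - insert d x) \<union> (insert d x - x) = {d}" by auto
  thus ?thesis by (simp add: hamming_def)
qed

lemma hamming_sym: "hamming x y = hamming y x"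
  by (simp add: hamming_def Un_commute)

lemma hamming_self: "hamming x x = 0"
  by (simp add: hamming_def)

lemma hamming_tri:
  assumes "finite x" "finite y" "finite z"
  shows "hamming x z \<le> hamming x y + hamming y z"
proof -
  have "(x - z) \<union> (z - x) \<subseteq> ((x - y) \<union> (y - x)) \<union> ((y - z) \<union> (z - y))" by blast
  hence "card ((x - z) \<union> (z - x)) \<le> card (((x - y) \<union> (y - x)) \<union> ((y - z) \<union> (z - y)))"
    by (intro card_mono) (use assms in auto)
  also have "\<dots> \<le> card ((x - y) \<union> (y - x)) + card ((y - z) \<union> (z - y))"
    by (rule card_Un_le)
  finally show ?thesis by (simp add: hamming_def)
qed

definition avg :: "nat \<Rightarrow> (nat set \<Rightarrow> real) \<Rightarrow> real" where
  "avg d g = (\<Sum>x\<in>cube d. g x) / 2 ^ d"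

lemma mgf:
  assumes "lipschitz_on_cube d g" "lam \<ge> 0"
  shows "(\<Sum>x\<in>cube d. exp (lam * g x)) \<le> 2 ^ d * exp (lam * avg d g + real d * lam\<^sup>2 / 8)"
  using assms(1)
proof (induction d arbitrary: g)
  case 0
  have "cube 0 = {{}}" by (simp add: cube_def)
  thus ?case by (simp add: avg_def)
next
  case (Suc d)
  define h where "h x = (g x + g (insert d x)) / 2" for x
  have sub1: "cube d \<subseteq> cube (Suc d)" and sub2: "insert d ` cube d \<subseteq> cube (Suc d)"
    using cube_Suc by auto
  have lh: "lipschitz_on_cube d h"
    unfolding lipschitz_on_cube_def
  proof (intro ballI)
    fix x y assume xy: "x \<in> cube d" "y \<in> cube d"
    have "\<bar>g x - g y\<bar> \<le> real (hamming x y)"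
      using Suc.prems xy sub1 unfolding lipschitz_on_cube_def by blast
    moreover have "\<bar>g (insert d x) - g (insert d y)\<bar> \<le> real (hamming x y)"
      using Suc.prems xy sub2 hamming_insert[OF xy] unfolding lipschitz_on_cube_def
      by (metis image_subset_iff)
    ultimately have "\<bar>(g x - g y) + (g (insert d x) - g (insert d y))\<bar> \<le> 2 * real (hamming x y)"
      by (simp only: abs_le_iff) linarith
    moreover have "h x - h y = ((g x - g y) + (g (insert d x) - g (insert d y))) / 2"
      unfolding h_def by (simp add: field_simps)
    ultimately show "\<bar>h x - h y\<bar> \<le> real (hamming x y)"
      by simp
  qed
  have step: "exp (lam * g x) + exp (lam * g (insert d x)) \<le> 2 * exp (lam\<^sup>2/8) * exp (lam * h x)"
    if x: "x \<in> cube d" for x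
  proof -
    have "\<bar>g x - g (insert d x)\<bar> \<le> 1"
      using Suc.prems x sub1 sub2 hamming_insert1[OF x] unfolding lipschitz_on_cube_def
      by (metis image_subset_iff of_nat_1 subsetD imageI)
    from two_point[OF assms(2) this]
    show ?thesis by (simp add: h_def exp_add[symmetric] algebra_simps)
  qed
  have "(\<Sum>x\<in>cube (Suc d). exp (lam * g x)) = (\<Sum>x\<in>cube d. exp (lam * g x) + exp (lam * g (insert d x)))"
    by (rule sum_cube_Suc)
  also have "\<dots> \<le> (\<Sum>x\<in>cube d. 2 * exp (lam\<^sup>2/8) * exp (lam * h x))"
    by (rule sum_mono) (rule step)
  also have "\<dots> = 2 * exp (lam\<^sup>2/8) * (\<Sum>x\<in>cube d. exp (lam * h x))"
    by (simp add: sum_distrib_left)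
  also have "\<dots> \<le> 2 * exp (lam\<^sup>2/8) * (2 ^ d * exp (lam * avg d h + real d * lam\<^sup>2 / 8))"
    using Suc.IH[OF lh] by (intro mult_left_mono) auto
  also have "avg d h = avg (Suc d) g"
    unfolding avg_def h_def sum_cube_Suc
    by (simp add: sum_divide_distrib[symmetric] sum.distrib)
  also have "2 * exp (lam\<^sup>2/8) * (2 ^ d * exp (lam * avg (Suc d) g + real d * lam\<^sup>2 / 8))
      = 2 ^ Suc d * exp (lam * avg (Suc d) g + real (Suc d) * lam\<^sup>2 / 8)"
    by (simp add: exp_add[symmetric] algebra_simps add_divide_distrib)
  finally show ?case .
qed

lemma tail_upper:
  assumes "lipschitz_on_cube d g" "s > 0" "d > 0"
  shows "real (card {x\<in>cube d. g x - avg d g \<ge> s}) \<le> 2 ^ d * exp (- 2 * s\<^sup>2 / real d)"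
proof -
  define lam where "lam = 4 * s / real d"
  have lam0: "lam \<ge> 0" using assms by (simp add: lam_def)
  define T where "T = {x\<in>cube d. g x - avg d g \<ge> s}"
  have fin: "finite (cube d)" by (simp add: cube_def)
  have "real (card T) * exp (lam * s) = (\<Sum>x\<in>T. exp (lam * s))" by simp
  also have "\<dots> \<le> (\<Sum>x\<in>T. exp (lam * g x) * exp (- lam * avg d g))"
  proof (rule sum_mono)
    fix x assume "x \<in> T"
    hence "lam * s \<le> lam * (g x - avg d g)" unfolding T_def using lam0 mult_left_mono by auto
    thus "exp (lam * s) \<le> exp (lam * g x) * exp (- lam * avg d g)"
      by (simp add: exp_add[symmetric] algebra_simps)
  qed
  also have "\<dots> \<le> (\<Sum>x\<in>cube d. exp (lam * g x) * exp (- lam * avg d g))"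
    by (rule sum_mono2) (use fin T_def in auto)
  also have "\<dots> = (\<Sum>x\<in>cube d. exp (lam * g x)) * exp (- lam * avg d g)"
    by (simp add: sum_distrib_right)
  also have "\<dots> \<le> 2 ^ d * exp (lam * avg d g + real d * lam\<^sup>2 / 8) * exp (- lam * avg d g)"
    using mgf[OF assms(1) lam0] by (intro mult_right_mono) auto
  also have "\<dots> = 2 ^ d * exp (real d * lam\<^sup>2 / 8)"
    by (simp add: mult.assoc exp_add[symmetric])
  finally have A: "real (card T) * exp (lam * s) \<le> 2 ^ d * exp (real d * lam\<^sup>2 / 8)" .
  have "real (card T) \<le> 2 ^ d * exp (real d * lam\<^sup>2 / 8) / exp (lam * s)"
    using A by (simp add: field_simps)
  also have "\<dots> = 2 ^ d * exp (real d * lam\<^sup>2 / 8 - lam * s)"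
    by (simp add: exp_diff)
  also have "real d * lam\<^sup>2 / 8 - lam * s = - 2 * s\<^sup>2 / real d"
    using assms by (simp add: lam_def field_simps power2_eq_square)
  finally show ?thesis unfolding T_def .
qed

lemma tail_two:
  assumes "lipschitz_on_cube d g" "s > 0" "d > 0"
  shows "real (card {x\<in>cube d. \<bar>g x - avg d g\<bar> \<ge> s}) \<le> 2 * 2 ^ d * exp (- 2 * s\<^sup>2 / real d)"
proof -
  have l2: "lipschitz_on_cube d (\<lambda>x. - g x)"
    using assms(1) unfolding lipschitz_on_cube_def by (simp add: abs_minus_commute)
  have av: "avg d (\<lambda>x. - g x) = - avg d g"
    by (simp add: avg_def sum_negf)
  have fin: "finite (cube d)" by (simp add: cube_def)
  have "{x\<in>cube d. \<bar>g x - avg d g\<bar> \<ge> s} \<subseteq>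
        {x\<in>cube d. g x - avg d g \<ge> s} \<union> {x\<in>cube d. - g x - avg d (\<lambda>x. - g x) \<ge> s}"
    using av by auto
  hence "card {x\<in>cube d. \<bar>g x - avg d g\<bar> \<ge> s} \<le>
        card ({x\<in>cube d. g x - avg d g \<ge> s} \<union> {x\<in>cube d. - g x - avg d (\<lambda>x. - g x) \<ge> s})"
    by (intro card_mono) (use fin in auto)
  also have "\<dots> \<le> card {x\<in>cube d. g x - avg d g \<ge> s} + card {x\<in>cube d. - g x - avg d (\<lambda>x. - g x) \<ge> s}"
    by (rule card_Un_le)
  finally have "real (card {x\<in>cube d. \<bar>g x - avg d g\<bar> \<ge> s}) \<le>
      real (card {x\<in>cube d. g x - avg d g \<ge> s}) + real (card {x\<in>cube d. - g x - avg d (\<lambda>x. - g x) \<ge> s})"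
    by linarith
  also have "\<dots> \<le> 2 ^ d * exp (- 2 * s\<^sup>2 / real d) + 2 ^ d * exp (- 2 * s\<^sup>2 / real d)"
    using tail_upper[OF assms] tail_upper[OF l2 assms(2,3)] by (intro add_mono)
  finally show ?thesis by simp
qed

theorem lemma6p5:
  fixes d :: nat and \<epsilon> :: real and f :: "nat set \<Rightarrow> real" and C :: "nat set set"
  assumes "0 < \<epsilon>" and "\<epsilon> < 1/3" and "d \<ge> 4"
    and "l0_dist_lip d f \<le> \<epsilon>"
    and "min_vertex_cover_B0 d f C"
  shows "real (card {p \<in> cube d.
            let t = 2 * sqrt (real d * ln (real d / \<epsilon>));
                I = {f p - t .. f p + t}
            in prob_outside d f I > eps_mass d f C (- I) + \<epsilon> / real d}) / 2 ^ d
         \<le> 5 / 12"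
proof -
  have fin: "finite (cube d)" by (simp add: cube_def)
  have cardcube: "card (cube d) = 2 ^ d" by (simp add: cube_def card_Pow)
  have d0: "real d \<ge> 4" using assms(3) by simp
  define A where "A = disagree d f ` {g. lipschitz_on_cube d g}"
  have Asub: "A \<subseteq> (\<lambda>k. real k / 2 ^ d) ` {..card (cube d)}"
  proof
    fix a assume "a \<in> A"
    then obtain g where a: "a = real (card {x\<in>cube d. f x \<noteq> g x}) / 2 ^ d"
      unfolding A_def disagree_def by auto
    have "card {x\<in>cube d. f x \<noteq> g x} \<le> card (cube d)"
      by (rule card_mono) (use fin in auto)
    thus "a \<in> (\<lambda>k. real k / 2 ^ d) ` {..card (cube d)}" using a by auto
  qed
  have Afin: "finite A" using Asub finite_subset by blast
  have lip0: "lipschitz_on_cube d (\<lambda>_. 0)" by (simp add: lipschitz_on_cube_def)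
  have Ane: "A \<noteq> {}" using lip0 unfolding A_def by blast
  have "Inf A \<in> A" using cInf_eq_Min[OF Afin Ane] Min_in[OF Afin Ane] by simp
  then obtain g0 where g0: "lipschitz_on_cube d g0" "disagree d f g0 \<le> \<epsilon>"
    using assms(4) unfolding A_def l0_dist_lip_def by auto
  define S where "S = {x\<in>cube d. f x \<noteq> g0 x}"
  have vcS: "vertex_cover_B0 d f S"
    unfolding vertex_cover_B0_def
  proof (intro conjI allI impI)
    show "S \<subseteq> cube d" by (auto simp: S_def)
    fix x y assume e: "B0_edge d f x y"
    show "x \<in> S \<or> y \<in> S"
    proof (rule ccontr)
      assume "\<not> (x \<in> S \<or> y \<in> S)"
      with e have "f x = g0 x" "f y = g0 y" by (auto simp: S_def B0_edge_def)
      moreover have "\<bar>g0 x - g0 y\<bar> \<le> real (hamming x y)"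
        using g0(1) e unfolding lipschitz_on_cube_def B0_edge_def by blast
      ultimately have "VS f x y = 0" by (simp add: VS_def)
      with e show False by (simp add: B0_edge_def)
    qed
  qed
  have cardC: "real (card C) \<le> \<epsilon> * 2 ^ d"
  proof -
    have "card C \<le> card S" using assms(5) vcS unfolding min_vertex_cover_B0_def by blast
    hence "real (card C) \<le> real (card S)" by simp
    moreover have "real (card S) / 2 ^ d \<le> \<epsilon>" using g0(2) by (simp add: disagree_def S_def)
    hence "real (card S) \<le> \<epsilon> * 2 ^ d" by (simp add: field_simps)
    ultimately show ?thesis by linarith
  qed
  have Csub: "C \<subseteq> cube d"
    using assms(5) unfolding min_vertex_cover_B0_def vertex_cover_B0_def by blast
  have Cfin: "finite C" using Csub fin finite_subset by blast
  define D where "D = cube d - C"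
  have Dfin: "finite D" using fin by (simp add: D_def)
  have DC: "D \<subseteq> cube d" by (auto simp: D_def)
  have Dne: "D \<noteq> {}"
  proof
    assume "D = {}"
    hence "C = cube d" using Csub by (auto simp: D_def)
    hence "(2::real) ^ d \<le> \<epsilon> * 2 ^ d" using cardC cardcube by simp
    moreover have "\<epsilon> * 2 ^ d < 1 * (2::real) ^ d"
      using assms(2) by (intro mult_strict_right_mono) auto
    ultimately show False by simp
  qed
  have flipD: "\<bar>f x - f y\<bar> \<le> real (hamming x y)" if "x \<in> D" "y \<in> D" for x y
  proof (rule ccontr)
    assume "\<not> \<bar>f x - f y\<bar> \<le> real (hamming x y)"
    hence "B0_edge d f x y" using that by (auto simp: B0_edge_def VS_def D_def)
    hence "x \<in> C \<or> y \<in> C"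
      using assms(5) unfolding min_vertex_cover_B0_def vertex_cover_B0_def by blast
    with that show False by (auto simp: D_def)
  qed
  define G where "G x = Min ((\<lambda>y. f y + real (hamming x y)) ` D)" for x
  have Gle: "G x \<le> f y + real (hamming x y)" if "y \<in> D" for x y
    unfolding G_def using Dfin that by (intro Min_le) auto
  have Gex: "\<exists>y\<in>D. G x = f y + real (hamming x y)" for x
  proof -
    have "G x \<in> (\<lambda>y. f y + real (hamming x y)) ` D"
      unfolding G_def using Dfin Dne by (intro Min_in) auto
    thus ?thesis by auto
  qed
  have finx: "finite x" if "x \<in> cube d" for x
    using that by (auto simp: cube_def intro: finite_subset)
  have GD: "G y = f y" if "y \<in> D" for y
  proof (rule antisym)
    show "G y \<le> f y" using Gle[OF that, of y] by (simp add: hamming_self)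
    obtain z where z: "z \<in> D" "G y = f z + real (hamming y z)" using Gex by blast
    have "\<bar>f y - f z\<bar> \<le> real (hamming y z)" using flipD[OF that z(1)] .
    hence "f y \<le> f z + real (hamming y z)" by (simp only: abs_le_iff) linarith
    with z show "f y \<le> G y" by simp
  qed
  have one: "G x - G z \<le> real (hamming x z)" if "x \<in> cube d" "z \<in> cube d" for x z
  proof -
    obtain y where y: "y \<in> D" "G z = f y + real (hamming z y)" using Gex by blast
    have "hamming x y \<le> hamming x z + hamming z y"
      using hamming_tri finx that y DC by blast
    hence "real (hamming x y) \<le> real (hamming x z) + real (hamming z y)"
      by (simp only: of_nat_add[symmetric] of_nat_le_iff)
    with Gle[OF y(1), of x] y(2) show ?thesis by linarith
  qed
  have Glip: "lipschitz_on_cube d G"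
    unfolding lipschitz_on_cube_def
  proof (intro ballI)
    fix x y assume xy: "x \<in> cube d" "y \<in> cube d"
    have "G x - G y \<le> real (hamming x y)" "G y - G x \<le> real (hamming x y)"
      using one[OF xy] one[OF xy(2,1)] hamming_sym[of y x] by auto
    thus "\<bar>G x - G y\<bar> \<le> real (hamming x y)" by (simp add: abs_le_iff)
  qed
  define L where "L = ln (real d / \<epsilon>)"
  define t where "t = 2 * sqrt (real d * ln (real d / \<epsilon>))"
  define s where "s = sqrt (real d * L)"
  have de: "real d / \<epsilon> > 1" using assms(1,2) d0 by (simp add: field_simps)
  have L0: "L > 0" using de by (simp add: L_def ln_gt_zero)
  have s0: "s > 0" using L0 d0 by (simp add: s_def)
  have ts: "t = 2 * s" by (simp add: t_def s_def L_def)
  have ssq: "s\<^sup>2 = real d * L" using L0 d0 by (simp add: s_def)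
  have expL: "exp (- 2 * s\<^sup>2 / real d) = (\<epsilon> / real d)\<^sup>2"
  proof -
    have "- 2 * s\<^sup>2 / real d = - L + - L" using ssq d0 by (simp add: field_simps)
    hence "exp (- 2 * s\<^sup>2 / real d) = exp (- L + - L)" by (simp only:)
    also have "\<dots> = exp (- L) * exp (- L)" by (rule exp_add)
    also have "exp (- L) = \<epsilon> / real d"
      using de assms(1) by (simp add: L_def exp_minus)
    finally show ?thesis by (simp add: power2_eq_square)
  qed
  define m where "m = avg d G"
  define Bt where "Bt = {x\<in>cube d. \<bar>G x - m\<bar> \<ge> s}"
  have Btfin: "finite Bt" using fin by (simp add: Bt_def)
  have cardBt: "real (card Bt) \<le> 2 * 2 ^ d * (\<epsilon> / real d)\<^sup>2"
    using tail_two[OF Glip s0] assms(3) expL by (simp add: Bt_def m_def)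
  have ed: "\<epsilon> / real d \<le> 1 / 12" using assms(1,2) d0 by (simp add: field_simps)
  have ed0: "\<epsilon> / real d \<ge> 0" using assms(1) by simp
  have small: "2 * (\<epsilon> / real d)\<^sup>2 \<le> \<epsilon> / real d"
  proof -
    have two: "2 * (\<epsilon> / real d) \<le> 1" using ed by linarith
    have "2 * (\<epsilon> / real d)\<^sup>2 = (\<epsilon> / real d) * (2 * (\<epsilon> / real d))" by (simp add: power2_eq_square)
    also have "(\<epsilon> / real d) * (2 * (\<epsilon> / real d)) \<le> (\<epsilon> / real d) * 1"
      using two ed0 by (intro mult_left_mono) auto
    finally show ?thesis by simp
  qed
  let ?P = "{p \<in> cube d.
            let t = 2 * sqrt (real d * ln (real d / \<epsilon>));
                I = {f p - t .. f p + t}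
            in prob_outside d f I > eps_mass d f C (- I) + \<epsilon> / real d}"
  have Psub: "?P \<subseteq> C \<union> Bt"
  proof
    fix p assume pP: "p \<in> ?P"
    show "p \<in> C \<union> Bt"
    proof (rule ccontr)
      assume nc: "p \<notin> C \<union> Bt"
      have pc: "p \<in> cube d" using pP by simp
      have pD: "p \<in> D" using pc nc by (simp add: D_def)
      have pm: "\<bar>G p - m\<bar> < s" using nc pc by (auto simp: Bt_def)
      define I where "I = {f p - t .. f p + t}"
      have sub: "{x\<in>cube d. f x \<notin> I} \<subseteq> {x\<in>C. f x \<in> - I} \<union> Bt"
      proof
        fix x assume x: "x \<in> {x\<in>cube d. f x \<notin> I}"
        show "x \<in> {x\<in>C. f x \<in> - I} \<union> Bt"
        proof (cases "x \<in> C")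
          case True with x show ?thesis by auto
        next
          case False
          hence xD: "x \<in> D" using x by (simp add: D_def)
          have "f x < f p - t \<or> f x > f p + t" using x by (auto simp: I_def)
          hence "G x < G p - t \<or> G x > G p + t" using GD[OF xD] GD[OF pD] by simp
          moreover have "G p - m < s" "m - G p < s" using pm by (simp_all only: abs_less_iff) linarith+
          ultimately have "G x - m \<ge> s \<or> m - G x \<ge> s" using ts by linarith
          hence "\<bar>G x - m\<bar> \<ge> s" by linarith
          then show ?thesis using x by (simp add: Bt_def)
        qed
      qed
      have "card {x\<in>cube d. f x \<notin> I} \<le> card ({x\<in>C. f x \<in> - I} \<union> Bt)"
        by (rule card_mono) (use Cfin Btfin sub in auto)
      also have "\<dots> \<le> card {x\<in>C. f x \<in> - I} + card Bt" by (rule card_Un_le)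
      finally have "real (card {x\<in>cube d. f x \<notin> I}) \<le> real (card {x\<in>C. f x \<in> - I}) + real (card Bt)"
        by (simp only: of_nat_add[symmetric] of_nat_le_iff)
      also have "\<dots> \<le> real (card {x\<in>C. f x \<in> - I}) + 2 ^ d * (\<epsilon> / real d)"
      proof -
        have "(2::real) ^ d * (2 * (\<epsilon> / real d)\<^sup>2) \<le> 2 ^ d * (\<epsilon> / real d)"
          using small by (intro mult_left_mono) auto
        hence "2 * 2 ^ d * (\<epsilon> / real d)\<^sup>2 \<le> 2 ^ d * (\<epsilon> / real d)" by (simp add: mult_ac)
        thus ?thesis using cardBt by linarith
      qed
      finally have "real (card {x\<in>cube d. f x \<notin> I}) / 2 ^ d
          \<le> (real (card {x\<in>C. f x \<in> - I}) + 2 ^ d * (\<epsilon> / real d)) / 2 ^ d"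
        by (intro divide_right_mono) auto
      hence "prob_outside d f I \<le> eps_mass d f C (- I) + \<epsilon> / real d"
        unfolding prob_outside_def eps_mass_def by (simp add: add_divide_distrib)
      moreover have "prob_outside d f I > eps_mass d f C (- I) + \<epsilon> / real d"
        using pP by (simp add: I_def t_def Let_def)
      ultimately show False by linarith
    qed
  qed
  have "card ?P \<le> card (C \<union> Bt)" by (rule card_mono) (use Cfin Btfin Psub in auto)
  also have "\<dots> \<le> card C + card Bt" by (rule card_Un_le)
  finally have "real (card ?P) \<le> real (card C) + real (card Bt)"
    by (simp only: of_nat_add[symmetric] of_nat_le_iff)
  also have "\<dots> \<le> \<epsilon> * 2 ^ d + 2 * 2 ^ d * (1/12)\<^sup>2"
  proof -
    have "(\<epsilon> / real d)\<^sup>2 \<le> (1/12)\<^sup>2" using ed ed0 by (intro power_mono) auto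
    hence "2 * 2 ^ d * (\<epsilon> / real d)\<^sup>2 \<le> 2 * 2 ^ d * (1/12)\<^sup>2" by (intro mult_left_mono) auto
    thus ?thesis using cardC cardBt by linarith
  qed
  also have "\<dots> \<le> 5 / 12 * 2 ^ d"
  proof -
    have "\<epsilon> * 2 ^ d \<le> 1/3 * (2::real) ^ d" using assms(2) by (intro mult_right_mono) auto
    moreover have "2 * (2::real) ^ d * (1/12)\<^sup>2 = (1/72) * 2 ^ d" by (simp add: power2_eq_square)
    moreover have "(2::real) ^ d > 0" by simp
    ultimately show ?thesis by linarith
  qed
  finally have X: "real (card ?P) \<le> 5 / 12 * 2 ^ d" .
  have pos: "(0::real) < 2 ^ d" by simp
  show ?thesis using pos_divide_le_eq[OF pos, of "real (card ?P)" "5/12"] X by blast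
qed

end
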